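(* Let $E$ be a directed graph and let $G(E)$ carry a Hausdorff topology making it a topological semigroup such that its set of idempotents $E(G(E))$ is compact. Then $G(E)$ is closed in every topological semigroup $S$ which contains $G(E)$ as a subsemigroup (and topological subspace).
   Context: All spaces are Hausdorff. $E(T)$ denotes the set of idempotents of a semigroup $T$. A directed graph $E=(E^0,E^1,r,s)$ has vertices $E^0$, edges $E^1$, source/range maps $s,r:E^1\to E^0$; paths are vertices and sequences of edges $e_1\ldots e_n$ with $r(e_i)=s(e_{i+1})$. The graph inverse semigroup $G(E)$ is the semigroup with zero $0$ generated by $E^0$, $E^1$, $E^{-1}=\{e^{-1}\mid e\in E^1\}$ subject to: for $a,b\in E^0$, $e,f\in E^1$: $ab=a$ if $a=b$, else $0$; $s(e)e=er(e)=e$; $e^{-1}s(e)=r(e)e^{-1}=e^{-1}$; $e^{-1}f=r(e)$ if $e=f$, else $0$. Non-zero elements are uniquely $uv^{-1}$ with paths $u,v$, $r(u)=r(v)$, multiplied by $u_1v_1^{-1}\cdot u_2v_2^{-1}=u_1wv_2^{-1}$ if $u_2=v_1w$, $u_1(v_2w)^{-1}$ if $v_1=u_2w$, else $0$. *)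

theory Defs
  imports "HOL-Analysis.Analysis"
begin

text \<open>A path is represented as a pair (a, es) of its
  source vertex a and its list of edges es; the vertex a itself is the path (a, []).\<close>

definition is_graph :: "'v set \<Rightarrow> 'e set \<Rightarrow> ('e \<Rightarrow> 'v) \<Rightarrow> ('e \<Rightarrow> 'v) \<Rightarrow> bool" where
  "is_graph V Ed src rng \<longleftrightarrow> (\<forall>e\<in>Ed. src e \<in> V \<and> rng e \<in> V)"

type_synonym ('v, 'e) path = "'v \<times> 'e list"

definition is_path :: "'v set \<Rightarrow> 'e set \<Rightarrow> ('e \<Rightarrow> 'v) \<Rightarrow> ('e \<Rightarrow> 'v) \<Rightarrow> ('v, 'e) path \<Rightarrow> bool" where
  "is_path V Ed src rng p \<longleftrightarrow>
     (case p of (a, es) \<Rightarrow>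
        a \<in> V \<and> set es \<subseteq> Ed \<and>
        (es \<noteq> [] \<longrightarrow> src (hd es) = a) \<and>
        (\<forall>i. Suc i < length es \<longrightarrow> rng (es ! i) = src (es ! Suc i)))"

definition path_rng :: "('e \<Rightarrow> 'v) \<Rightarrow> ('v, 'e) path \<Rightarrow> 'v" where
  "path_rng rng p = (if snd p = [] then fst p else rng (last (snd p)))"

text \<open>Concatenation u w of paths (meaningful when r(u) = s(w)).\<close>
definition path_cat :: "('v, 'e) path \<Rightarrow> ('v, 'e) path \<Rightarrow> ('v, 'e) path" where
  "path_cat u w = (fst u, snd u @ snd w)"

definition path_prefix :: "('v, 'e) path \<Rightarrow> ('v, 'e) path \<Rightarrow> bool" where
  "path_prefix p q \<longleftrightarrow> fst p = fst q \<and> (\<exists>ws. snd q = snd p @ ws)"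

definition path_rest :: "('e \<Rightarrow> 'v) \<Rightarrow> ('v, 'e) path \<Rightarrow> ('v, 'e) path \<Rightarrow> ('v, 'e) path" where
  "path_rest rng p q = (path_rng rng p, drop (length (snd p)) (snd q))"

text \<open>Elements of the graph inverse semigroup: 0 or u v^{-1}.\<close>
datatype ('v, 'e) gis = GZero | GElem "('v, 'e) path" "('v, 'e) path"

definition gis_carrier :: "'v set \<Rightarrow> 'e set \<Rightarrow> ('e \<Rightarrow> 'v) \<Rightarrow> ('e \<Rightarrow> 'v) \<Rightarrow> ('v, 'e) gis set" where
  "gis_carrier V Ed src rng =
     insert GZero {GElem u v | u v. is_path V Ed src rng u \<and> is_path V Ed src rng v \<and>
                                     path_rng rng u = path_rng rng v}"

fun gis_mult :: "('e \<Rightarrow> 'v) \<Rightarrow> ('v, 'e) gis \<Rightarrow> ('v, 'e) gis \<Rightarrow> ('v, 'e) gis" where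
  "gis_mult rng GZero y = GZero"
| "gis_mult rng (GElem u v) GZero = GZero"
| "gis_mult rng (GElem u1 v1) (GElem u2 v2) =
     (if path_prefix v1 u2 then GElem (path_cat u1 (path_rest rng v1 u2)) v2
      else if path_prefix u2 v1 then GElem u1 (path_cat v2 (path_rest rng u2 v1))
      else GZero)"

definition top_semigroup :: "'a topology \<Rightarrow> ('a \<Rightarrow> 'a \<Rightarrow> 'a) \<Rightarrow> bool" where
  "top_semigroup T m \<longleftrightarrow>
     Hausdorff_space T \<and>
     (\<forall>x\<in>topspace T. \<forall>y\<in>topspace T. m x y \<in> topspace T) \<and>
     (\<forall>x\<in>topspace T. \<forall>y\<in>topspace T. \<forall>z\<in>topspace T. m (m x y) z = m x (m y z)) \<and>
     continuous_map (prod_topology T T) T (\<lambda>(x, y). m x y)"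

end

theory Submission
  imports Defs
begin

lemma cat_rest_self: "path_cat u (path_rest rng u u) = u"
  by (cases u) (simp add: path_cat_def path_rest_def)

lemma prefix_self: "path_prefix u u"
  by (simp add: path_prefix_def)

lemma carrier_mem: "GElem u v \<in> gis_carrier V Ed src rng \<longleftrightarrow>
   is_path V Ed src rng u \<and> is_path V Ed src rng v \<and> path_rng rng u = path_rng rng v"
  unfolding gis_carrier_def by blast

lemma prefix_antisym: "path_prefix u v \<Longrightarrow> path_prefix v u \<Longrightarrow> u = v"
  by (auto simp: path_prefix_def prod_eq_iff)

lemma idem_mult:
  "gis_mult rng (GElem u u) (GElem v v) =
     (if path_prefix u v then GElem v v else if path_prefix v u then GElem u u else GZero)"
  by (cases u; cases v) (auto simp: path_prefix_def path_cat_def path_rest_def)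

lemma idem_form:
  assumes "gis_mult rng (GElem u v) (GElem u v) = GElem u v" shows "u = v"
proof -
  obtain p xs q ys where u: "u = (p, xs)" and v: "v = (q, ys)" by (cases u, cases v)
  show ?thesis using assms
    by (auto simp: u v path_prefix_def path_cat_def path_rest_def split: if_splits)
qed

lemma lid_mult: "gis_mult rng (GElem u u) (GElem u v) = GElem u v"
  by (cases u) (auto simp: path_prefix_def path_cat_def path_rest_def)

lemma rid_mult: "gis_mult rng (GElem u v) (GElem v v) = GElem u v"
  by (cases u; cases v) (auto simp: path_prefix_def path_cat_def path_rest_def)

lemma zero_right: "gis_mult rng x GZero = GZero"
  by (cases x) auto


lemma is_path_iff: "is_path V Ed src rng (p, es) \<longleftrightarrow>
        p \<in> V \<and> set es \<subseteq> Ed \<and>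
        (es \<noteq> [] \<longrightarrow> src (hd es) = p) \<and>
        (\<forall>i. Suc i < length es \<longrightarrow> rng (es ! i) = src (es ! Suc i))"
  unfolding is_path_def by simp

lemma is_path_prefix:
  assumes "is_path V Ed src rng (p, xs @ ys)" shows "is_path V Ed src rng (p, xs)"
proof -
  from assms have a: "p \<in> V" "set (xs@ys) \<subseteq> Ed" "xs @ ys \<noteq> [] \<longrightarrow> src (hd (xs@ys)) = p"
     "\<forall>i. Suc i < length (xs@ys) \<longrightarrow> rng ((xs@ys) ! i) = src ((xs@ys) ! Suc i)"
    unfolding is_path_iff by blast+
  have b: "\<forall>i. Suc i < length xs \<longrightarrow> rng (xs ! i) = src (xs ! Suc i)"
  proof (intro allI impI)
    fix i assume i: "Suc i < length xs"
    then have "rng ((xs@ys) ! i) = src ((xs@ys) ! Suc i)" using a(4) by simp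
    then show "rng (xs ! i) = src (xs ! Suc i)" using i by (simp add: nth_append)
  qed
  have c: "xs \<noteq> [] \<longrightarrow> src (hd xs) = p" using a(3) by auto
  show ?thesis unfolding is_path_iff using a(1,2) b c by auto
qed
lemma cont2_at:
  assumes "continuous_map (prod_topology X X) X (\<lambda>(x,y). f x y)" "openin X A"
    "a \<in> topspace X" "b \<in> topspace X" "f a b \<in> A"
  shows "\<exists>U V. openin X U \<and> openin X V \<and> a\<in>U \<and> b\<in>V \<and> (\<forall>x\<in>U. \<forall>y\<in>V. f x y \<in> A)"
proof -
  define S where "S = {z \<in> topspace (prod_topology X X). (\<lambda>(x,y). f x y) z \<in> A}"
  have "openin (prod_topology X X) S"
    unfolding S_def using assms(1,2) by (rule openin_continuous_map_preimage)
  moreover have "(a,b) \<in> S"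
    unfolding S_def using assms(3,4,5) by (simp add: topspace_prod_topology)
  ultimately obtain U V where UV: "openin X U" "openin X V" "a\<in>U" "b\<in>V" "U \<times> V \<subseteq> S"
    unfolding openin_prod_topology_alt by meson
  have "\<forall>x\<in>U. \<forall>y\<in>V. f x y \<in> A"
  proof (intro ballI)
    fix x y assume "x \<in> U" "y \<in> V"
    then have "(x,y) \<in> S" using UV(5) by blast
    then show "f x y \<in> A" unfolding S_def by simp
  qed
  then show ?thesis using UV(1-4) by blast
qed
lemma cont_left:
  assumes "continuous_map (prod_topology X X) X (\<lambda>(x,y). f x y)" "c \<in> topspace X"
  shows "continuous_map X X (\<lambda>y. f c y)"
proof -
  have "continuous_map X (prod_topology X X) (\<lambda>y. (c, y))"
    using assms(2) by (intro continuous_map_pairedI) auto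
  from continuous_map_compose[OF this assms(1)] show ?thesis by (simp add: o_def)
qed

lemma cont_right:
  assumes "continuous_map (prod_topology X X) X (\<lambda>(x,y). f x y)" "c \<in> topspace X"
  shows "continuous_map X X (\<lambda>y. f y c)"
proof -
  have "continuous_map X (prod_topology X X) (\<lambda>y. (y, c))"
    using assms(2) by (intro continuous_map_pairedI) auto
  from continuous_map_compose[OF this assms(1)] show ?thesis by (simp add: o_def)
qed

lemma cont_flip:
  assumes "continuous_map (prod_topology X X) X (\<lambda>(x,y). f x y)"
  shows "continuous_map (prod_topology X X) X (\<lambda>(x,y). f y x)"
proof -
  have "continuous_map (prod_topology X X) (prod_topology X X) (\<lambda>z. (snd z, fst z))"
    by (intro continuous_map_pairedI continuous_map_fst continuous_map_snd)
  from continuous_map_compose[OF this assms] show ?thesis by (simp add: o_def case_prod_unfold)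
qed

lemma iso:
  fixes T :: "('v,'e) gis topology"
  assumes carrier: "topspace T = gis_carrier VV Ed src rng"
    and tsg: "top_semigroup T (gis_mult rng)"
    and cpt: "compactin T {x \<in> topspace T. gis_mult rng x x = x}"
    and Pin: "GElem a a \<in> topspace T"
  shows "\<exists>U. openin T U \<and> GElem a a \<in> U \<and> (\<forall>g\<in>U. gis_mult rng g g = g \<longrightarrow> g = GElem a a)"
proof (rule ccontr)
  assume nonisol: "\<not> ?thesis"
  define M where "M = gis_mult rng"
  define G where "G = topspace T"
  define Es where "Es = {x \<in> G. M x x = x}"
  define P where "P = GElem a a"
  have Hs: "Hausdorff_space T" and cl: "\<And>x y. x\<in>G \<Longrightarrow> y\<in>G \<Longrightarrow> M x y \<in> G"
    and cm: "continuous_map (prod_topology T T) T (\<lambda>(x,y). M x y)"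
    using tsg unfolding top_semigroup_def M_def G_def by blast+
  have PG: "P \<in> G" using Pin by (simp add: P_def G_def)
  have ZG: "GZero \<in> G" using carrier by (simp add: G_def gis_carrier_def)
  have PP: "M P P = P" by (simp add: M_def P_def cat_rest_self prefix_self)
  have nonisol': "\<And>U. openin T U \<Longrightarrow> P \<in> U \<Longrightarrow> \<exists>g\<in>U. M g g = g \<and> g \<noteq> P"
    using nonisol unfolding M_def P_def by blast
  have Gcases: "\<And>g. g \<in> G \<Longrightarrow> g = GZero \<or> (\<exists>u v. g = GElem u v \<and> is_path VV Ed src rng u \<and> is_path VV Ed src rng v)"
    using carrier unfolding G_def gis_carrier_def by blast
  obtain U0 Z where U0: "openin T U0" "P \<in> U0" "GZero \<notin> U0"
  proof -
    have "P \<noteq> GZero" by (simp add: P_def)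
    then obtain U0 Z where "openin T U0" "openin T Z" "P \<in> U0" "GZero \<in> Z" "disjnt U0 Z"
      using Hs PG ZG unfolding Hausdorff_space_def G_def by blast
    then show ?thesis using that by (auto simp: disjnt_iff)
  qed
  define V1 where "V1 = {g \<in> G. M P g \<in> U0}"
  have V1o: "openin T V1"
    unfolding V1_def G_def
    using openin_continuous_map_preimage[OF cont_left[OF cm, of P] U0(1)] PG G_def by blast
  define Fin where "Fin = (\<lambda>k. GElem (fst a, take k (snd a)) (fst a, take k (snd a))) ` {..<length (snd a)}"
  define V where "V = V1 - (Fin \<inter> G)"
  have Vo: "openin T V" unfolding V_def
    by (rule openin_diff[OF V1o closedin_Hausdorff_finite[OF Hs]]) (auto simp: Fin_def G_def)
  have PF: "P \<notin> Fin"
  proof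
    assume "P \<in> Fin"
    then obtain k where k: "k < length (snd a)"
      and e: "GElem a a = GElem (fst a, take k (snd a)) (fst a, take k (snd a))"
      unfolding Fin_def P_def by blast
    from e have "snd a = take k (snd a)" by (simp add: prod_eq_iff)
    then have "length (snd a) = length (take k (snd a))" by (rule arg_cong)
    then show False using k by simp
  qed
  have PV: "P \<in> V" unfolding V_def V1_def using PG PP U0(2) PF by simp
  have VG: "V \<subseteq> G" by (auto simp: V_def V1_def)
  have form: "\<exists>f z. g = GElem (fst a, snd a @ f # z) (fst a, snd a @ f # z)"
    if g: "g \<in> V" "M g g = g" "g \<noteq> P" for g
  proof -
    have gG: "g \<in> G" and gU: "M P g \<in> U0" and gF: "g \<notin> Fin" using g(1) by (auto simp: V_def V1_def)
    have "M P GZero = GZero" by (simp add: M_def P_def)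
    then have "g \<noteq> GZero" using gU U0(3) by metis
    then obtain u v where uv: "g = GElem u v" using Gcases[OF gG] by blast
    then have uu: "u = v" using g(2) idem_form[of rng u v] by (simp only: M_def)
    have ne: "M P g \<noteq> GZero" using gU U0(3) by metis
    have eq: "M P g = (if path_prefix a u then GElem u u else if path_prefix u a then GElem a a else GZero)"
      by (simp only: M_def P_def uv uu idem_mult)
    have "path_prefix a u \<or> path_prefix u a"
      using ne eq by metis
    then show ?thesis
    proof
      assume "path_prefix a u"
      then obtain ws where u: "u = (fst a, snd a @ ws)"
        unfolding path_prefix_def by (cases u) auto
      have "ws \<noteq> []" using g(3) u uv uu by (cases a) (auto simp: P_def)
      then obtain f z where "ws = f # z" by (cases ws) auto
      then show ?thesis using u uv uu by blast
    next
      assume "path_prefix u a"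
      then obtain ws where u1: "fst u = fst a" and u2: "snd a = snd u @ ws"
        unfolding path_prefix_def by auto
      show ?thesis
      proof (cases "ws = []")
        case True
        then have "u = a" using u1 u2 by (simp add: prod_eq_iff)
        then show ?thesis using g(3) uv uu by (simp add: P_def)
      next
        case False
        have "u = (fst a, take (length (snd u)) (snd a))" using u1 u2 by (simp add: prod_eq_iff)
        moreover have "length (snd u) < length (snd a)" using u2 False by simp
        ultimately have "g \<in> Fin" unfolding Fin_def uv uu by blast
        then show ?thesis using gF by blast
      qed
    qed
  qed
  define D where "D = {GElem c c | c f. c = (fst a, snd a @ [f]) \<and> GElem c c \<in> G}"
  have DG: "D \<subseteq> G" by (auto simp: D_def)
  have DE: "\<And>k. k \<in> D \<Longrightarrow> M k k = k"
    by (auto simp: D_def M_def cat_rest_self prefix_self)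
  have DP: "\<And>k. k \<in> D \<Longrightarrow> k \<noteq> P"
    by (auto simp: D_def P_def prod_eq_iff)
  have DPk: "\<And>k. k \<in> D \<Longrightarrow> M P k = k"
  proof -
    fix k assume "k \<in> D"
    then obtain f where k: "k = GElem (fst a, snd a @ [f]) (fst a, snd a @ [f])"
      by (auto simp: D_def)
    have pre: "path_prefix a (fst a, snd a @ [f])" by (simp add: path_prefix_def)
    show "M P k = k" unfolding M_def P_def k idem_mult using pre by simp
  qed
  have Dorth: "\<And>k k'. k \<in> D \<Longrightarrow> k' \<in> D \<Longrightarrow> k \<noteq> k' \<Longrightarrow> M k k' = GZero"
  proof -
    fix k k' assume "k \<in> D" "k' \<in> D" "k \<noteq> k'"
    then obtain f f' where k: "k = GElem (fst a, snd a @ [f]) (fst a, snd a @ [f])"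
      and k': "k' = GElem (fst a, snd a @ [f']) (fst a, snd a @ [f'])"
      by (auto simp: D_def)
    have ff: "f \<noteq> f'" using \<open>k \<noteq> k'\<close> k k' by auto
    have n1: "\<not> path_prefix (fst a, snd a @ [f]) (fst a, snd a @ [f'])"
      using ff by (auto simp: path_prefix_def)
    have n2: "\<not> path_prefix (fst a, snd a @ [f']) (fst a, snd a @ [f])"
      using ff by (auto simp: path_prefix_def)
    show "M k k' = GZero" unfolding M_def k k' idem_mult using n1 n2 by simp
  qed
  have kfact: "\<exists>k\<in>D. M g k = g"
    if g: "g \<in> G" "g = GElem (fst a, snd a @ f # z) (fst a, snd a @ f # z)" for g f z
  proof -
    define c where "c = (fst a, snd a @ [f])"
    have "is_path VV Ed src rng (fst a, snd a @ f # z)"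
      using g carrier unfolding G_def by (simp add: carrier_mem)
    then have "is_path VV Ed src rng c"
      unfolding c_def using is_path_prefix[of VV Ed src rng "fst a" "snd a @ [f]" z] by simp
    then have "GElem c c \<in> G" using carrier unfolding G_def by (simp add: carrier_mem)
    then have kD: "GElem c c \<in> D" unfolding D_def c_def by blast
    have pre: "path_prefix c (fst a, snd a @ f # z)" by (simp add: path_prefix_def c_def)
    have "M g (GElem c c) = g" unfolding M_def g(2) idem_mult using pre prefix_antisym[OF _ pre] by auto
    then show ?thesis using kD by blast
  qed
  have closD: "\<exists>k\<in>D. k \<in> W" if W: "openin T W" "P \<in> W" for W
  proof (rule ccontr)
    assume DW: "\<not> (\<exists>k\<in>D. k \<in> W)"
    have cov: "\<exists>Ob N. openin T Ob \<and> openin T N \<and> e \<in> Ob \<and> P \<in> N \<and>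
               (\<forall>g\<in>N. \<forall>k\<in>D. k \<in> Ob \<longrightarrow> M g k = g \<longrightarrow> False)" if e: "e \<in> Es" for e
    proof -
      have eG: "e \<in> G" using e by (simp add: Es_def)
      consider "e = P" | "e \<noteq> P" "M P e \<noteq> e" | "e \<noteq> P" "M P e = e" by blast
      then show ?thesis
      proof cases
        case 1
        then show ?thesis using W DW PG by (auto simp: G_def)
      next
        case 2
        define Ob where "Ob = G - {k \<in> G. M P k = k}"
        have "closedin T {k \<in> topspace T. M P k = id k}"
          by (rule closedin_continuous_maps_eq[OF Hs cont_left[OF cm] continuous_map_id]) (use PG G_def in simp)
        then have "openin T Ob" unfolding Ob_def G_def by (simp add: openin_diff)
        moreover have "e \<in> Ob" using eG 2 by (simp add: Ob_def)
        moreover have "\<forall>g\<in>G. \<forall>k\<in>D. k \<in> Ob \<longrightarrow> M g k = g \<longrightarrow> False"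
          using DPk by (auto simp: Ob_def)
        ultimately show ?thesis using PG by (auto simp: G_def)
      next
        case 3
        have "M P e \<noteq> P" using 3 by simp
        moreover have "M P e \<in> G" using cl PG eG by blast
        ultimately obtain A B where AB: "openin T A" "openin T B" "M P e \<in> A" "P \<in> B" "disjnt A B"
          using Hs PG unfolding Hausdorff_space_def G_def by blast
        obtain U Ob where UO: "openin T U" "openin T Ob" "P \<in> U" "e \<in> Ob"
          "\<forall>x\<in>U. \<forall>y\<in>Ob. M x y \<in> A"
          using cont2_at[OF cm AB(1), of P e] PG eG AB(3) by (auto simp: G_def)
        have "\<forall>g\<in>U \<inter> B. \<forall>k\<in>D. k \<in> Ob \<longrightarrow> M g k = g \<longrightarrow> False"
          using UO(5) AB(5) by (auto simp: disjnt_iff) (metis)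
        then show ?thesis using UO AB openin_Int[OF UO(1) AB(2)] by blast
      qed
    qed
    then obtain Ob N where ON: "\<And>e. e \<in> Es \<Longrightarrow> openin T (Ob e) \<and> openin T (N e) \<and> e \<in> Ob e \<and> P \<in> N e \<and>
               (\<forall>g\<in>N e. \<forall>k\<in>D. k \<in> Ob e \<longrightarrow> M g k = g \<longrightarrow> False)"
      by metis
    have "Es \<subseteq> \<Union>(Ob ` Es)" using ON by blast
    moreover have "\<forall>B\<in>Ob ` Es. openin T B" using ON by blast
    ultimately obtain F where F: "finite F" "F \<subseteq> Ob ` Es" "Es \<subseteq> \<Union>F"
      using cpt unfolding compactin_def Es_def M_def G_def by meson
    then obtain I where I: "I \<subseteq> Es" "finite I" "F = Ob ` I"
      using finite_subset_image by metis
    define Nn where "Nn = V \<inter> \<Inter>(N ` I)"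
    have "openin T Nn" unfolding Nn_def
      using openin_Int_Inter[OF finite_imageI[OF I(2)] Vo] ON I(1) by blast
    moreover have "P \<in> Nn" unfolding Nn_def using PV ON I(1) by blast
    ultimately obtain g where g: "g \<in> Nn" "M g g = g" "g \<noteq> P"
      using nonisol' by blast
    have gV: "g \<in> V" using g(1) by (simp add: Nn_def)
    obtain f z where gf: "g = GElem (fst a, snd a @ f # z) (fst a, snd a @ f # z)"
      using form[OF gV g(2,3)] by blast
    obtain k where k: "k \<in> D" "M g k = g" using kfact[OF _ gf] gV VG by blast
    have "k \<in> Es" using k(1) DG DE by (auto simp: Es_def)
    then obtain e where e: "e \<in> I" "k \<in> Ob e" using F(3) I(3) by blast
    have "g \<in> N e" using g(1) e(1) by (simp add: Nn_def)
    then show False using ON[of e] e I(1) k by blast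
  qed
  obtain U1 U2 where U12: "openin T U1" "openin T U2" "P \<in> U1" "P \<in> U2"
    "\<forall>x\<in>U1. \<forall>y\<in>U2. M x y \<in> U0"
    using cont2_at[OF cm U0(1), of P P] PG PP U0(2) by (auto simp: G_def)
  define W where "W = U1 \<inter> U2"
  have Wo: "openin T W" "P \<in> W" using U12 by (auto simp: W_def)
  then obtain k where k: "k \<in> D" "k \<in> W" using closD by blast
  have "openin T (W - {k})" using open_in_Hausdorff_delete[OF Hs Wo(1)] .
  moreover have "P \<in> W - {k}" using Wo(2) DP[OF k(1)] by blast
  ultimately obtain k' where k': "k' \<in> D" "k' \<in> W - {k}" using closD by blast
  have "M k k' \<in> U0" using U12(5) k(2) k'(2) by (auto simp: W_def)
  moreover have "M k k' = GZero" using Dorth k(1) k'(1) k'(2) by blast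
  ultimately show False using U0(3) by simp
qed

lemma near_finite:
  fixes h :: "'g \<Rightarrow> 's"
  assumes HS: "Hausdorff_space TS"
   and cl: "\<forall>a\<in>topspace TS. \<forall>b\<in>topspace TS. mm a b \<in> topspace TS"
   and cm: "continuous_map (prod_topology TS TS) TS (\<lambda>(x,y). mm x y)"
   and cptE: "compactin TS (h ` Es)"
   and x: "x \<in> topspace TS"
   and sig: "\<forall>s\<in>G. \<sigma> s \<in> Es \<and> h s = mm (h (\<sigma> s)) (h s)"
   and z: "mm (h z) x \<noteq> x"
   and isoS: "\<forall>e\<in>Es. e \<noteq> z \<longrightarrow> (\<exists>U. openin TS U \<and> h e \<in> U \<and> (\<forall>g\<in>Es. h g \<in> U \<longrightarrow> g = e))"
  shows "\<exists>N F. openin TS N \<and> x \<in> N \<and> finite F \<and> (\<forall>s\<in>G. h s \<in> N \<longrightarrow> \<sigma> s \<in> F)"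
proof -
  have hE: "\<And>e. e \<in> Es \<Longrightarrow> h e \<in> topspace TS" using cptE by (auto simp: compactin_def)
  have cov: "\<exists>Ob N. openin TS Ob \<and> openin TS N \<and> h e \<in> Ob \<and> x \<in> N \<and>
      (\<forall>s\<in>G. h s \<in> N \<longrightarrow> h (\<sigma> s) \<in> Ob \<longrightarrow> \<sigma> s = e)" if e: "e \<in> Es" for e
  proof (cases "mm (h e) x = x")
    case True
    then have "e \<noteq> z" using z by blast
    then obtain U where U: "openin TS U" "h e \<in> U" "\<forall>g\<in>Es. h g \<in> U \<longrightarrow> g = e"
      using isoS e by blast
    show ?thesis
      by (rule exI[of _ U], rule exI[of _ "topspace TS"]) (use U x sig in auto)
  next
    case False
    have "mm (h e) x \<in> topspace TS" using cl hE[OF e] x by blast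
    then obtain A B where AB: "openin TS A" "openin TS B" "mm (h e) x \<in> A" "x \<in> B" "disjnt A B"
      using HS x False unfolding Hausdorff_space_def by blast
    obtain U V where UV: "openin TS U" "openin TS V" "h e \<in> U" "x \<in> V"
          "\<forall>a\<in>U. \<forall>b\<in>V. mm a b \<in> A"
      using cont2_at[OF cm AB(1), of "h e" x] hE[OF e] x AB(3) by blast
    have "\<forall>s\<in>G. h s \<in> V \<inter> B \<longrightarrow> h (\<sigma> s) \<in> U \<longrightarrow> \<sigma> s = e"
    proof (intro ballI impI)
      fix s assume s: "s \<in> G" "h s \<in> V \<inter> B" "h (\<sigma> s) \<in> U"
      then have "mm (h (\<sigma> s)) (h s) \<in> A" using UV(5) by blast
      then have "h s \<in> A" using sig s(1) by metis
      then show "\<sigma> s = e" using s(2) AB(5) by (auto simp: disjnt_iff)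
    qed
    then show ?thesis using UV AB openin_Int[OF UV(2) AB(2)] by blast
  qed
  then obtain Ob N where ON: "\<And>e. e \<in> Es \<Longrightarrow> openin TS (Ob e) \<and> openin TS (N e) \<and> h e \<in> Ob e \<and> x \<in> N e \<and>
      (\<forall>s\<in>G. h s \<in> N e \<longrightarrow> h (\<sigma> s) \<in> Ob e \<longrightarrow> \<sigma> s = e)"
    by metis
  have "h ` Es \<subseteq> \<Union>(Ob ` Es)" using ON by blast
  moreover have "\<forall>B\<in>Ob ` Es. openin TS B" using ON by blast
  ultimately obtain F where F: "finite F" "F \<subseteq> Ob ` Es" "h ` Es \<subseteq> \<Union>F"
    using cptE unfolding compactin_def by meson
  then obtain I where I: "I \<subseteq> Es" "finite I" "F = Ob ` I"
    using finite_subset_image by metis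
  define Nn where "Nn = topspace TS \<inter> \<Inter>(N ` I)"
  have "openin TS Nn" unfolding Nn_def
    using openin_Int_Inter[OF finite_imageI[OF I(2)] openin_topspace] ON I(1) by blast
  moreover have "x \<in> Nn" unfolding Nn_def using x ON I(1) by blast
  moreover have "\<forall>s\<in>G. h s \<in> Nn \<longrightarrow> \<sigma> s \<in> I"
  proof (intro ballI impI)
    fix s assume s: "s \<in> G" "h s \<in> Nn"
    have "\<sigma> s \<in> Es" using sig s(1) by blast
    then obtain e where e: "e \<in> I" "h (\<sigma> s) \<in> Ob e" using F(3) I(3) by blast
    have "h s \<in> N e" using s(2) e(1) by (simp add: Nn_def)
    then show "\<sigma> s \<in> I" using ON[of e] e I(1) s(1) by blast
  qed
  ultimately show ?thesis using I(2) by blast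
qed

definition lid :: "('v,'e) gis \<Rightarrow> ('v,'e) gis" where
  "lid s = (case s of GZero \<Rightarrow> GZero | GElem u v \<Rightarrow> GElem u u)"
definition rid :: "('v,'e) gis \<Rightarrow> ('v,'e) gis" where
  "rid s = (case s of GZero \<Rightarrow> GZero | GElem u v \<Rightarrow> GElem v v)"

lemma lid_rid_inj: "inj (\<lambda>s. (lid s, rid s))"
proof (rule injI)
  fix s t :: "('v,'e) gis" assume "(lid s, rid s) = (lid t, rid t)"
  then show "s = t" by (cases s; cases t) (auto simp: lid_def rid_def)
qed

theorem lemma2p5:
  fixes V :: "'v set" and Ed :: "'e set" and src rng :: "'e \<Rightarrow> 'v"
    and T :: "('v, 'e) gis topology"
    and TS :: "'s topology" and m :: "'s \<Rightarrow> 's \<Rightarrow> 's"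
    and h :: "('v, 'e) gis \<Rightarrow> 's"
  assumes graph: "is_graph V Ed src rng"
    and carrier: "topspace T = gis_carrier V Ed src rng"
    and tsg: "top_semigroup T (gis_mult rng)"
    and idem_compact: "compactin T {x \<in> topspace T. gis_mult rng x x = x}"
    and S: "top_semigroup TS m"
    and emb: "embedding_map T TS h"
    and hom: "\<forall>x\<in>topspace T. \<forall>y\<in>topspace T. h (gis_mult rng x y) = m (h x) (h y)"
  shows "closedin TS (h ` topspace T)"
proof -
  define M where "M = gis_mult rng"
  define G where "G = topspace T"
  define Es where "Es = {x \<in> G. M x x = x}"
  have HS: "Hausdorff_space TS" and clS: "\<forall>a\<in>topspace TS. \<forall>b\<in>topspace TS. m a b \<in> topspace TS"
    and cmS: "continuous_map (prod_topology TS TS) TS (\<lambda>(x,y). m x y)"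
    using S unfolding top_semigroup_def by blast+
  have homeo: "homeomorphic_map T (subtopology TS (h ` G)) h"
    using emb unfolding embedding_map_def G_def .
  have inj: "inj_on h G" using homeomorphic_imp_injective_map[OF homeo] by (simp add: G_def)
  have hcont: "continuous_map T TS h"
    using homeomorphic_imp_continuous_map[OF homeo] continuous_map_in_subtopology by blast
  have hG: "h ` G \<subseteq> topspace TS"
    using continuous_map_image_subset_topspace[OF hcont] by (simp add: G_def)
  have cptE: "compactin TS (h ` Es)"
    using image_compactin[OF idem_compact hcont] by (simp add: Es_def M_def G_def)
  have ZG: "GZero \<in> G" using carrier by (simp add: G_def gis_carrier_def)
  have Gcases: "\<And>g. g \<in> G \<Longrightarrow> g = GZero \<or> (\<exists>u v. g = GElem u v \<and> is_path V Ed src rng u \<and> is_path V Ed src rng v \<and> path_rng rng u = path_rng rng v)"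
    using carrier unfolding G_def gis_carrier_def by blast
  have isoS: "\<forall>e\<in>Es. e \<noteq> GZero \<longrightarrow> (\<exists>U. openin TS U \<and> h e \<in> U \<and> (\<forall>g\<in>Es. h g \<in> U \<longrightarrow> g = e))"
  proof (intro ballI impI)
    fix e assume e: "e \<in> Es" "e \<noteq> GZero"
    have "e \<in> G" using e(1) by (simp add: Es_def)
    then obtain u v where uv: "e = GElem u v" using Gcases e(2) by blast
    then have "u = v" using e(1) idem_form[of rng u v] by (simp add: Es_def M_def)
    then have ea: "e = GElem u u" using uv by simp
    obtain U where U: "openin T U" "e \<in> U" "\<forall>g\<in>U. M g g = g \<longrightarrow> g = e"
      using iso[OF carrier tsg idem_compact, of u] e(1) ea unfolding Es_def M_def G_def by blast
    have UG: "U \<subseteq> G" using openin_subset[OF U(1)] by (simp add: G_def)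
    have "openin (subtopology TS (h ` G)) (h ` U)"
      using homeomorphic_map_openness[OF homeo] UG U(1) by (simp add: G_def)
    then obtain U' where U': "openin TS U'" "h ` U = U' \<inter> h ` G"
      unfolding openin_subtopology by blast
    have "h e \<in> U'" using U' U(2) by blast
    moreover have "\<forall>g\<in>Es. h g \<in> U' \<longrightarrow> g = e"
    proof (intro ballI impI)
      fix g assume g: "g \<in> Es" "h g \<in> U'"
      then have gG: "g \<in> G" by (simp add: Es_def)
      then have "h g \<in> h ` U" using U'(2) g(2) by blast
      then obtain w where w: "w \<in> U" "h g = h w" by blast
      then have "g = w" using inj gG UG unfolding inj_on_def by blast
      then show "g = e" using U(3) w(1) g(1) by (simp add: Es_def)
    qed
    ultimately show "\<exists>U. openin TS U \<and> h e \<in> U \<and> (\<forall>g\<in>Es. h g \<in> U \<longrightarrow> g = e)"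
      using U'(1) by blast
  qed
  have h00: "h GZero = m (h GZero) (h GZero)"
  proof -
    have "h (gis_mult rng GZero GZero) = m (h GZero) (h GZero)" using hom ZG unfolding G_def by blast
    then show ?thesis by simp
  qed
  have lidE: "\<forall>s\<in>G. lid s \<in> Es \<and> h s = m (h (lid s)) (h s)"
  proof
    fix s assume s: "s \<in> G"
    show "lid s \<in> Es \<and> h s = m (h (lid s)) (h s)"
    proof (cases "s = GZero")
      case True
      then show ?thesis using ZG h00 by (auto simp: lid_def Es_def M_def)
    next
      case False
      then obtain u v where uv: "s = GElem u v" "is_path V Ed src rng u" using Gcases[OF s] by blast
      have l: "lid s = GElem u u" by (simp add: lid_def uv)
      have lG: "GElem u u \<in> G" using carrier uv(2) by (simp add: G_def carrier_mem)
      have "M (GElem u u) (GElem u u) = GElem u u" by (simp add: M_def cat_rest_self prefix_self)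
      then have "lid s \<in> Es" using lG l by (simp add: Es_def)
      moreover have "h s = m (h (lid s)) (h s)"
      proof -
        have "h (M (GElem u u) s) = m (h (GElem u u)) (h s)" using hom lG s unfolding G_def M_def by blast
        moreover have "M (GElem u u) s = s" unfolding M_def uv(1) by (rule lid_mult)
        ultimately show ?thesis using l by simp
      qed
      ultimately show ?thesis by blast
    qed
  qed
  have ridE: "\<forall>s\<in>G. rid s \<in> Es \<and> h s = (\<lambda>a b. m b a) (h (rid s)) (h s)"
  proof
    fix s assume s: "s \<in> G"
    show "rid s \<in> Es \<and> h s = (\<lambda>a b. m b a) (h (rid s)) (h s)"
    proof (cases "s = GZero")
      case True
      then show ?thesis using ZG h00 by (auto simp: rid_def Es_def M_def)
    next
      case False
      then obtain u v where uv: "s = GElem u v" "is_path V Ed src rng v" using Gcases[OF s] by blast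
      have l: "rid s = GElem v v" by (simp add: rid_def uv)
      have lG: "GElem v v \<in> G" using carrier uv(2) by (simp add: G_def carrier_mem)
      have "M (GElem v v) (GElem v v) = GElem v v" by (simp add: M_def cat_rest_self prefix_self)
      then have "rid s \<in> Es" using lG l by (simp add: Es_def)
      moreover have "h s = m (h s) (h (rid s))"
      proof -
        have "h (M s (GElem v v)) = m (h s) (h (GElem v v))" using hom lG s unfolding G_def M_def by blast
        moreover have "M s (GElem v v) = s" unfolding M_def uv(1) by (rule rid_mult)
        ultimately show ?thesis using l by simp
      qed
      ultimately show ?thesis by blast
    qed
  qed
  have h0: "h GZero \<in> topspace TS" using hG ZG by blast
  show ?thesis
    unfolding G_def[symmetric]
  proof (rule ccontr)
    assume "\<not> closedin TS (h ` G)"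
    then obtain x where xc: "x \<in> TS closure_of (h ` G)" and xn: "x \<notin> h ` G"
      using closure_of_subset_eq hG by blast
    have xT: "x \<in> topspace TS" using xc in_closure_of by fastforce
    have zl: "m (h GZero) x \<noteq> x"
    proof
      assume eq: "m (h GZero) x = x"
      have c1: "closedin TS {y \<in> topspace TS. m (h GZero) y = (\<lambda>_. h GZero) y}"
        by (rule closedin_continuous_maps_eq[OF HS cont_left[OF cmS h0]]) (simp add: h0)
      have c2: "h ` G \<subseteq> {y \<in> topspace TS. m (h GZero) y = (\<lambda>_. h GZero) y}"
      proof
        fix y assume "y \<in> h ` G"
        then obtain s where s: "s \<in> G" "y = h s" by blast
        have "h (gis_mult rng GZero s) = m (h GZero) (h s)" using hom ZG s(1) unfolding G_def by blast
        then have "m (h GZero) y = h GZero" using s(2) by simp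
        then show "y \<in> {y \<in> topspace TS. m (h GZero) y = (\<lambda>_. h GZero) y}"
          using hG s by blast
      qed
      have "TS closure_of (h ` G) \<subseteq> {y \<in> topspace TS. m (h GZero) y = (\<lambda>_. h GZero) y}"
        by (rule closure_of_minimal[OF c2 c1])
      then have "x \<in> {y \<in> topspace TS. m (h GZero) y = (\<lambda>_. h GZero) y}" using xc by (rule subsetD)
      then have "x = h GZero" using eq by simp
      then show False using xn ZG by blast
    qed
    have zr: "(\<lambda>a b. m b a) (h GZero) x \<noteq> x"
    proof
      assume eq: "(\<lambda>a b. m b a) (h GZero) x = x"
      have c1: "closedin TS {y \<in> topspace TS. m y (h GZero) = (\<lambda>_. h GZero) y}"
        by (rule closedin_continuous_maps_eq[OF HS cont_right[OF cmS h0]]) (simp add: h0)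
      have c2: "h ` G \<subseteq> {y \<in> topspace TS. m y (h GZero) = (\<lambda>_. h GZero) y}"
      proof
        fix y assume "y \<in> h ` G"
        then obtain s where s: "s \<in> G" "y = h s" by blast
        have "h (gis_mult rng s GZero) = m (h s) (h GZero)" using hom ZG s(1) unfolding G_def by blast
        then have "m y (h GZero) = h GZero" using s(2) zero_right[of rng s] by simp
        then show "y \<in> {y \<in> topspace TS. m y (h GZero) = (\<lambda>_. h GZero) y}"
          using hG s by blast
      qed
      have "TS closure_of (h ` G) \<subseteq> {y \<in> topspace TS. m y (h GZero) = (\<lambda>_. h GZero) y}"
        by (rule closure_of_minimal[OF c2 c1])
      then have "x \<in> {y \<in> topspace TS. m y (h GZero) = (\<lambda>_. h GZero) y}" using xc by (rule subsetD)
      then have "x = h GZero" using eq by simp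
      then show False using xn ZG by blast
    qed
    obtain N1 F1 where N1: "openin TS N1" "x \<in> N1" "finite F1" "\<forall>s\<in>G. h s \<in> N1 \<longrightarrow> lid s \<in> F1"
      using near_finite[OF HS clS cmS cptE xT lidE zl isoS] by blast
    have clS': "\<forall>a\<in>topspace TS. \<forall>b\<in>topspace TS. (\<lambda>a b. m b a) a b \<in> topspace TS" using clS by blast
    have cmS': "continuous_map (prod_topology TS TS) TS (\<lambda>(x,y). (\<lambda>a b. m b a) x y)"
      using cont_flip[OF cmS] by simp
    obtain N2 F2 where N2: "openin TS N2" "x \<in> N2" "finite F2" "\<forall>s\<in>G. h s \<in> N2 \<longrightarrow> rid s \<in> F2"
      using near_finite[OF HS clS' cmS' cptE xT ridE zr isoS] by blast
    define Phi where "Phi = (\<lambda>s. (lid s, rid s)) -` (F1 \<times> F2)"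
    have "finite Phi" unfolding Phi_def
      using finite_vimageI[OF finite_cartesian_product[OF N1(3) N2(3)] lid_rid_inj] .
    then have fin: "finite (h ` (Phi \<inter> G))" by simp
    have "h ` (Phi \<inter> G) \<subseteq> topspace TS" using hG by blast
    then have "closedin TS (h ` (Phi \<inter> G))" using closedin_Hausdorff_finite[OF HS _ fin] by blast
    then have No: "openin TS (N1 \<inter> N2 - h ` (Phi \<inter> G))" by (intro openin_diff openin_Int N1(1) N2(1))
    have xN: "x \<in> N1 \<inter> N2 - h ` (Phi \<inter> G)" using N1(2) N2(2) xn by blast
    from xc have cx: "\<And>W. x \<in> W \<Longrightarrow> openin TS W \<Longrightarrow> \<exists>y. y \<in> h ` G \<and> y \<in> W"
      unfolding in_closure_of by blast
    obtain y where y: "y \<in> h ` G" "y \<in> N1 \<inter> N2 - h ` (Phi \<inter> G)"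
      using cx[OF xN No] by blast
    then obtain s where s: "s \<in> G" "y = h s" by blast
    have "h s \<in> N1" "h s \<in> N2" using y(2) s(2) by auto
    then have "lid s \<in> F1" "rid s \<in> F2" using N1(4) N2(4) s(1) by auto
    then have "s \<in> Phi \<inter> G" using s(1) by (simp add: Phi_def)
    then have "h s \<in> h ` (Phi \<inter> G)" by (rule imageI)
    then show False using y(2) s(2) by simp
  qed
qed

end
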